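(* Let $S$ be an instance of 3-Partition (with $n_1\ge\cdots\ge n_{3m}$), let $1\le k\le 3m$, let $i_1,\dots,i_{3m-k+1}$ be natural numbers and $W=\prod_{j=1}^{3m-k+1}(a_1b^{i_j}a_2)$. Suppose an accepting computation of $w_S$ satisfying the V-Condition contains a subcomputation $$W\,\|\,v_{4k-3}D_kv_{4k-3}\,v_{4k-2}D_kv_{4k-2}\,T \;\vdash^*\; W'\,\|\,T,$$ where $T$ denotes the rest of the input string. Then $W'=W$ and $i_j\le n_k$ for all $j$. Conversely, if $i_j\le n_k$ for all $j$, then for any string $T$ there is a computation $W\,\|\,v_{4k-3}D_kv_{4k-3}\,v_{4k-2}D_kv_{4k-2}\,T\vdash^* W\,\|\,T$.
   Context: Queue automaton: a configuration is written $Q\,\|\,x$ ($Q$ = queue contents, $x$ = remaining input); a step from $Q\,\|\,\sigma x$ ($\sigma$ a symbol) goes either to $Q\sigma\,\|\,x$ (push the input symbol) or, if $Q=\sigma Q'$, to $Q'\,\|\,x$ (the input symbol is matched against the leftmost queue symbol, which is popped; that queue symbol was pushed from an earlier input position, and we say these two input occurrences are matched). $\vdash^*$ is zero or more steps; $\varepsilon$ is the empty string; an accepting computation of $w$ is a computation $\varepsilon\,\|\,w\vdash^*\varepsilon\,\|\,\varepsilon$. An instance of 3-Partition is a sequence $S=\langle n_i:1\le i\le 3m\rangle$ of natural numbers such that $B=(\sum_{i=1}^{3m}n_i)/m$ is an integer and $B/4<n_i<B/2$ for all $i$; throughout, the $n_i$ are in non-increasing order. Alphabet $\{a_1,a_2,b,e_0,e,c_1,c_2,x,y\}$;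 $u^i$ is $i$ copies of $u$ concatenated, $\prod_{\ell=1}^k u_\ell=u_1\cdots u_k$. Define $U_\ell=a_1^2b^\ell a_2^2$, $v_\ell=c_1x^\ell y^\ell c_2$, $D_k=U_{n_k}^{3m-k+1}$, $E_k=U_B^{3m-k}\,a_1b^{n_k}a_2\,U_B^{3m-k}$, $F_k=U_B^{2(3m-k)}$, $\mathrm{Load}_S=e_0\prod_{i=1}^m(b^{2B}e)$, $\mathrm{Dist}_S=e_0\prod_{i=1}^m((a_1b^Ba_2)^3e)$, $\mathrm{Ver}_S=\prod_{k=1}^{3m}[v_{4k-3}D_kv_{4k-3}\,v_{4k-2}D_kv_{4k-2}\,v_{4k-1}E_kv_{4k-1}\,v_{4k}F_kv_{4k}]$, $w_S=\mathrm{Load}_S\mathrm{Dist}_S\mathrm{Ver}_S$. Each $v_\ell$ ($1\le\ell\le12m$) occurs exactly twice in $w_S$. An accepting computation of $w_S$ satisfies the V-Condition if for each $\ell$ with $1\le\ell\le 12m$, the symbols of the second occurrence of $v_\ell$ in $w_S$ are all matched against the corresponding symbols of the first occurrence of $v_\ell$ in $w_S$. *)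

theory Defs
  imports Main
begin

datatype sym = A1 | A2 | Bs | E0 | Ee | C1 | C2 | Xs | Ys
  (* a_1, a_2, b, e_0, e, c_1, c_2, x, y *)

type_synonym config = "sym list \<times> sym list"  (* (queue Q, remaining input) *)

inductive step :: "config \<Rightarrow> config \<Rightarrow> bool" where
  push: "step (Q, \<sigma> # w) (Q @ [\<sigma>], w)"
| pop:  "step (\<sigma> # Q, \<sigma> # w) (Q, w)"

abbreviation steps :: "config \<Rightarrow> config \<Rightarrow> bool" where
  "steps \<equiv> step\<^sup>*\<^sup>*"

text \<open>A computation on an input w is described by its sequence of actions
(True = push the input symbol, False = match/pop). Since every step consumes one
input symbol, step i processes input position i (0-based). We track the queue as a
list of the input positions from which its symbols were pushed, so that matching of
input occurrences is explicit.\<close>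

fun qpos :: "bool list \<Rightarrow> nat \<Rightarrow> nat list" where
  "qpos acts 0 = []"
| "qpos acts (Suc i) = (if acts ! i then qpos acts i @ [i] else tl (qpos acts i))"

definition valid_run :: "sym list \<Rightarrow> bool list \<Rightarrow> bool" where
  "valid_run w acts \<longleftrightarrow> length acts = length w \<and>
     (\<forall>i < length w. \<not> acts ! i \<longrightarrow> qpos acts i \<noteq> [] \<and> w ! hd (qpos acts i) = w ! i)"

definition config_at :: "sym list \<Rightarrow> bool list \<Rightarrow> nat \<Rightarrow> config" where
  "config_at w acts i = (map (\<lambda>j. w ! j) (qpos acts i), drop i w)"

definition accepting_run :: "sym list \<Rightarrow> bool list \<Rightarrow> bool" where
  "accepting_run w acts \<longleftrightarrow> valid_run w acts \<and> qpos acts (length w) = []"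

definition matched :: "sym list \<Rightarrow> bool list \<Rightarrow> nat \<Rightarrow> nat \<Rightarrow> bool" where
  "matched w acts j i \<longleftrightarrow> i < length w \<and> \<not> acts ! i \<and> qpos acts i \<noteq> [] \<and> hd (qpos acts i) = j"

definition tp_m :: "nat list \<Rightarrow> nat" where
  "tp_m S = length S div 3"

definition tp_B :: "nat list \<Rightarrow> nat" where
  "tp_B S = sum_list S div tp_m S"

definition three_partition :: "nat list \<Rightarrow> bool" where
  "three_partition S \<longleftrightarrow> 0 < length S \<and> 3 dvd length S \<and> tp_m S dvd sum_list S \<and>
     (\<forall>n \<in> set S. tp_B S < 4 * n \<and> 2 * n < tp_B S)"

text \<open>n_k (1-indexed).\<close>
definition nk :: "nat list \<Rightarrow> nat \<Rightarrow> nat" where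
  "nk S k = S ! (k - 1)"

definition pw :: "sym list \<Rightarrow> nat \<Rightarrow> sym list" where
  "pw u i = concat (replicate i u)"

definition U :: "nat \<Rightarrow> sym list" where
  "U l = [A1, A1] @ replicate l Bs @ [A2, A2]"

definition v :: "nat \<Rightarrow> sym list" where
  "v l = [C1] @ replicate l Xs @ replicate l Ys @ [C2]"

definition D :: "nat list \<Rightarrow> nat \<Rightarrow> sym list" where
  "D S k = pw (U (nk S k)) (3 * tp_m S - k + 1)"

definition E :: "nat list \<Rightarrow> nat \<Rightarrow> sym list" where
  "E S k = pw (U (tp_B S)) (3 * tp_m S - k) @ [A1] @ replicate (nk S k) Bs @ [A2]
           @ pw (U (tp_B S)) (3 * tp_m S - k)"

definition F :: "nat list \<Rightarrow> nat \<Rightarrow> sym list" where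
  "F S k = pw (U (tp_B S)) (2 * (3 * tp_m S - k))"

definition Load :: "nat list \<Rightarrow> sym list" where
  "Load S = E0 # concat (replicate (tp_m S) (replicate (2 * tp_B S) Bs @ [Ee]))"

definition Dist :: "nat list \<Rightarrow> sym list" where
  "Dist S = E0 # concat (replicate (tp_m S) (pw ([A1] @ replicate (tp_B S) Bs @ [A2]) 3 @ [Ee]))"

definition Ver :: "nat list \<Rightarrow> sym list" where
  "Ver S = concat (map (\<lambda>k.
      v (4*k-3) @ D S k @ v (4*k-3) @ v (4*k-2) @ D S k @ v (4*k-2) @
      v (4*k-1) @ E S k @ v (4*k-1) @ v (4*k) @ F S k @ v (4*k)) [1..<3 * tp_m S + 1])"

definition wS :: "nat list \<Rightarrow> sym list" where
  "wS S = Load S @ Dist S @ Ver S"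

text \<open>V-Condition: for each l in 1..12m, the symbols of the second occurrence of v_l
in w_S are matched against the corresponding symbols of the first occurrence.
(Each v_l occurs exactly twice as a factor of w_S; p < q range over its occurrence
positions.)\<close>
definition V_condition :: "nat list \<Rightarrow> bool list \<Rightarrow> bool" where
  "V_condition S acts \<longleftrightarrow>
     (\<forall>l. 1 \<le> l \<and> l \<le> 12 * tp_m S \<longrightarrow>
        (\<forall>p q. p < q \<and> take (length (v l)) (drop p (wS S)) = v l
                     \<and> take (length (v l)) (drop q (wS S)) = v l \<longrightarrow>
           (\<forall>t < length (v l). matched (wS S) acts (p + t) (q + t))))"

definition Wd :: "nat list \<Rightarrow> sym list" where
  "Wd ii = concat (map (\<lambda>i. [A1] @ replicate i Bs @ [A2]) ii)"

definition seg :: "nat list \<Rightarrow> nat \<Rightarrow> sym list" where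
  "seg S k = v (4*k-3) @ D S k @ v (4*k-3) @ v (4*k-2) @ D S k @ v (4*k-2)"

end

theory Submission
  imports Defs
begin

definition sel :: "bool list \<Rightarrow> 'a list \<Rightarrow> 'a list" where
  "sel ms xs = map snd (filter fst (zip ms xs))"

lemma sel_append: "length ms1 = length D1 \<Longrightarrow> sel (ms1@ms2) (D1@D2) = sel ms1 D1 @ sel ms2 D2"
  by (simp add: sel_def zip_append)

lemma sel_Nil[simp]: "sel [] xs = []" "sel ms [] = []"
  by (auto simp: sel_def)

lemma sel_replicate: "length ms = k \<Longrightarrow> sel ms (replicate k x) = replicate (length (filter id ms)) x"
proof (induction ms arbitrary: k)
  case Nil thus ?case by simp
next
  case (Cons b ms) thus ?case by (cases k) (auto simp: sel_def)
qed

lemma len_filter_not: "length (filter Not m) = length m - length (filter id m)"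
  by (induction m) (auto simp: Suc_diff_le length_filter_le)

lemma U_eq: "U n = replicate 2 A1 @ replicate n Bs @ replicate 2 A2"
  by (simp add: U_def numeral_2_eq_2)

lemma len_U[simp]: "length (U n) = n + 4"
  by (simp add: U_def)

lemma sel_U:
  assumes "length ms = length (U n)"
  shows "\<exists>\<alpha> \<beta> \<gamma>. \<alpha> \<le> 2 \<and> \<beta> \<le> n \<and> \<gamma> \<le> 2 \<and>
     sel ms (U n) = replicate \<alpha> A1 @ replicate \<beta> Bs @ replicate \<gamma> A2 \<and>
     sel (map Not ms) (U n) = replicate (2-\<alpha>) A1 @ replicate (n-\<beta>) Bs @ replicate (2-\<gamma>) A2"
proof -
  define m1 where "m1 = take 2 ms"
  define m2 where "m2 = take n (drop 2 ms)"
  define m3 where "m3 = drop (n+2) ms"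
  have ms: "ms = m1 @ m2 @ m3" unfolding m1_def m2_def m3_def
    by (metis append_take_drop_id add.commute drop_drop)
  have l1: "length m1 = 2" and l2: "length m2 = n" and l3: "length m3 = 2"
    using assms by (auto simp: m1_def m2_def m3_def)
  have e1: "sel ms (U n) = replicate (length (filter id m1)) A1 @ replicate (length (filter id m2)) Bs
       @ replicate (length (filter id m3)) A2"
    unfolding ms U_eq using l1 l2 l3 by (simp add: sel_append sel_replicate)
  have e2: "sel (map Not ms) (U n) = replicate (2 - length (filter id m1)) A1 @ replicate (n - length (filter id m2)) Bs
       @ replicate (2 - length (filter id m3)) A2"
    unfolding ms U_eq using l1 l2 l3 by (simp add: sel_append sel_replicate len_filter_not)
  show ?thesis
    apply (rule exI[of _ "length (filter id m1)"], rule exI[of _ "length (filter id m2)"],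
           rule exI[of _ "length (filter id m3)"])
    using e1 e2 l1 l2 l3 length_filter_le by metis
qed

lemma Wd_Cons: "Wd (i#is) = A1 # replicate i Bs @ A2 # Wd is"
  by (simp add: Wd_def)

lemma Wd_hd: "Wd is = [] \<or> (\<exists>r. Wd is = A1 # r)"
  by (cases "is") (auto simp: Wd_Cons Wd_def)

lemma rep_eq: "replicate a x @ xs = replicate b x @ ys \<Longrightarrow>
   (a \<le> b \<and> xs = replicate (b-a) x @ ys) \<or> (b \<le> a \<and> ys = replicate (a-b) x @ xs)"
proof (induction a arbitrary: b)
  case 0 thus ?case by simp
next
  case (Suc a) thus ?case by (cases b) auto
qed

lemma M1:
  assumes "replicate \<alpha> A1 @ replicate \<beta> Bs @ replicate \<gamma> A2 @ X2 = Wd (i#is)" "\<gamma> \<le> 2"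
  shows "(\<alpha>=0 \<and> \<beta>=0 \<and> \<gamma>=0 \<and> X2 = Wd (i#is)) \<or>
         (\<alpha>=1 \<and> \<gamma>=0 \<and> \<beta> \<le> i \<and> X2 = replicate (i-\<beta>) Bs @ A2 # Wd is) \<or>
         (\<alpha>=1 \<and> \<beta>=i \<and> \<gamma>=1 \<and> X2 = Wd is)"
proof (cases \<alpha>)
  case 0
  then show ?thesis using assms by (cases \<beta>; cases \<gamma>) (auto simp: Wd_Cons)
next
  case (Suc \<alpha>')
  have a1: "\<alpha>' = 0"
  proof (rule ccontr)
    assume "\<alpha>' \<noteq> 0"
    then obtain a where "\<alpha>' = Suc a" by (cases \<alpha>') auto
    then show False using assms Suc by (cases i) (auto simp: Wd_Cons)
  qed
  have e: "replicate \<beta> Bs @ (replicate \<gamma> A2 @ X2) = replicate i Bs @ (A2 # Wd is)"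
    using assms Suc a1 by (simp add: Wd_Cons)
  have h: "\<beta> \<le> i \<and> replicate \<gamma> A2 @ X2 = replicate (i - \<beta>) Bs @ A2 # Wd is"
  proof -
    from rep_eq[OF e] show ?thesis
    proof
      assume h: "i \<le> \<beta> \<and> A2 # Wd is = replicate (\<beta> - i) Bs @ replicate \<gamma> A2 @ X2"
      show ?thesis
      proof (cases "\<beta> = i")
        case True then show ?thesis using h by simp
      next
        case False then show ?thesis using h by (cases "\<beta> - i"; cases \<gamma>) auto
      qed
    qed simp
  qed
  show ?thesis
    proof (cases "\<beta> < i")
      case True
      then show ?thesis using h Suc a1 by (cases \<gamma>; cases "i-\<beta>") auto
    next
      case False
      then have "\<beta> = i" using h by auto
      then have h2: "replicate \<gamma> A2 @ X2 = A2 # Wd is" using h by simp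
      consider "\<gamma> = 0" | "\<gamma> = 1" | "\<gamma> = 2" using assms(2) by linarith
      then show ?thesis
      proof cases
        case 1 then show ?thesis using h2 Suc a1 \<open>\<beta> = i\<close> by simp
      next
        case 2 then show ?thesis using h2 Suc a1 \<open>\<beta> = i\<close> by simp
      next
        case 3 then have "A2 # X2 = Wd is" using h2 by (simp add: numeral_2_eq_2)
        then show ?thesis using Wd_hd[of "is"] by auto
      qed
    qed
qed

lemma M2:
  assumes "replicate \<alpha> A1 @ replicate \<beta> Bs @ replicate \<gamma> A2 @ X2 = replicate r Bs @ A2 # Wd is" "\<gamma> \<le> 2"
  shows "(\<alpha>=0 \<and> \<beta> \<le> r \<and> \<gamma>=0 \<and> X2 = replicate (r-\<beta>) Bs @ A2 # Wd is) \<or>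
         (\<alpha>=0 \<and> \<beta>=r \<and> \<gamma>=1 \<and> X2 = Wd is)"
proof -
  have a0: "\<alpha> = 0"
  proof (rule ccontr)
    assume "\<alpha> \<noteq> 0"
    then obtain a where "\<alpha> = Suc a" by (cases \<alpha>) auto
    then show False using assms by (cases r) auto
  qed
  have e: "replicate \<beta> Bs @ (replicate \<gamma> A2 @ X2) = replicate r Bs @ (A2 # Wd is)"
    using assms a0 by simp
  have h: "\<beta> \<le> r \<and> replicate \<gamma> A2 @ X2 = replicate (r - \<beta>) Bs @ A2 # Wd is"
  proof -
    from rep_eq[OF e] show ?thesis
    proof
      assume h: "r \<le> \<beta> \<and> A2 # Wd is = replicate (\<beta> - r) Bs @ replicate \<gamma> A2 @ X2"
      show ?thesis
      proof (cases "\<beta> = r")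
        case True then show ?thesis using h by simp
      next
        case False then show ?thesis using h by (cases "\<beta> - r"; cases \<gamma>) auto
      qed
    qed simp
  qed
  show ?thesis
    proof (cases "\<beta> < r")
      case True
      then show ?thesis using h a0 by (cases \<gamma>; cases "r-\<beta>") auto
    next
      case False
      then have "\<beta> = r" using h by auto
      then have h2: "replicate \<gamma> A2 @ X2 = A2 # Wd is" using h by simp
      consider "\<gamma> = 0" | "\<gamma> = 1" | "\<gamma> = 2" using assms(2) by linarith
      then show ?thesis
      proof cases
        case 1 then show ?thesis using h2 a0 \<open>\<beta> = r\<close> by simp
      next
        case 2 then show ?thesis using h2 a0 \<open>\<beta> = r\<close> by simp
      next
        case 3 then have "A2 # X2 = Wd is" using h2 by (simp add: numeral_2_eq_2)
        then show ?thesis using Wd_hd[of "is"] by auto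
      qed
    qed
qed

abbreviation Upow :: "nat \<Rightarrow> nat \<Rightarrow> sym list" where
  "Upow M n \<equiv> concat (replicate M (U n))"

lemma len_Upow: "length (Upow M n) = M * (n + 4)"
  by (induction M) auto

lemma split_mask:
  assumes "length ms = length (Upow (Suc M) n)"
  obtains m1 m2 where "ms = m1 @ m2" "length m1 = length (U n)" "length m2 = length (Upow M n)"
proof -
  have "Upow (Suc M) n = U n @ Upow M n" by simp
  then have "length ms = length (U n) + length (Upow M n)" using assms by simp
  then show ?thesis using that[of "take (length (U n)) ms" "drop (length (U n)) ms"] by simp
qed

lemma Wd_Nil: "Wd is = [] \<longleftrightarrow> is = []"
  by (cases "is") (auto simp: Wd_Cons Wd_def)

lemma AB:
  "length ms = length (Upow M n) \<Longrightarrow>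
    (sel ms (Upow M n) = Wd is \<longrightarrow> length is \<le> M) \<and>
    (sel ms (Upow M n) = replicate r Bs @ A2 # Wd is \<longrightarrow> length is < M)"
proof (induction M arbitrary: ms "is" r)
  case 0
  have "sel ms (Upow 0 n) = []" by simp
  then show ?case using Wd_Nil[of "is"] by auto
next
  case (Suc M)
  from split_mask[OF Suc.prems] obtain m1 m2 where
    ms: "ms = m1 @ m2" "length m1 = length (U n)" "length m2 = length (Upow M n)" by blast
  obtain \<alpha> \<beta> \<gamma> where abg: "\<alpha> \<le> 2" "\<beta> \<le> n" "\<gamma> \<le> 2"
     "sel m1 (U n) = replicate \<alpha> A1 @ replicate \<beta> Bs @ replicate \<gamma> A2"
    using sel_U[OF ms(2)] by blast
  have sp: "sel ms (Upow (Suc M) n) = replicate \<alpha> A1 @ replicate \<beta> Bs @ replicate \<gamma> A2 @ sel m2 (Upow M n)"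
    using ms abg(4) by (simp add: sel_append)
  note IH = Suc.IH[OF ms(3)]
  show ?case
  proof (intro conjI impI)
    assume h: "sel ms (Upow (Suc M) n) = Wd is"
    show "length is \<le> Suc M"
    proof (cases "is")
      case Nil then show ?thesis by simp
    next
      case (Cons i is')
      have "replicate \<alpha> A1 @ replicate \<beta> Bs @ replicate \<gamma> A2 @ sel m2 (Upow M n) = Wd (i#is')"
        using h sp Cons by simp
      from M1[OF this abg(3)] show ?thesis using IH Cons by fastforce
    qed
  next
    assume h: "sel ms (Upow (Suc M) n) = replicate r Bs @ A2 # Wd is"
    have "replicate \<alpha> A1 @ replicate \<beta> Bs @ replicate \<gamma> A2 @ sel m2 (Upow M n) = replicate r Bs @ A2 # Wd is"
      using h sp by simp
    from M2[OF this abg(3)] show "length is < Suc M" using IH by fastforce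
  qed
qed

lemma C:
  "length ms = length (Upow M n) \<Longrightarrow> sel ms (Upow M n) = Wd ii \<Longrightarrow> length ii = M \<Longrightarrow>
    (\<forall>i\<in>set ii. i \<le> n) \<and> sel (map Not ms) (Upow M n) = Wd (map (\<lambda>i. n - i) ii)"
proof (induction M arbitrary: ms ii)
  case 0
  then show ?case by (auto simp: Wd_def)
next
  case (Suc M)
  from split_mask[OF Suc.prems(1)] obtain m1 m2 where
    ms: "ms = m1 @ m2" "length m1 = length (U n)" "length m2 = length (Upow M n)" by blast
  obtain \<alpha> \<beta> \<gamma> where abg: "\<alpha> \<le> 2" "\<beta> \<le> n" "\<gamma> \<le> 2"
     "sel m1 (U n) = replicate \<alpha> A1 @ replicate \<beta> Bs @ replicate \<gamma> A2"
     "sel (map Not m1) (U n) = replicate (2-\<alpha>) A1 @ replicate (n-\<beta>) Bs @ replicate (2-\<gamma>) A2"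
    using sel_U[OF ms(2)] by blast
  have sp: "sel ms (Upow (Suc M) n) = replicate \<alpha> A1 @ replicate \<beta> Bs @ replicate \<gamma> A2 @ sel m2 (Upow M n)"
    using ms abg(4) by (simp add: sel_append)
  have spn: "sel (map Not ms) (Upow (Suc M) n) = replicate (2-\<alpha>) A1 @ replicate (n-\<beta>) Bs @ replicate (2-\<gamma>) A2 @ sel (map Not m2) (Upow M n)"
    using ms abg(5) by (simp add: sel_append)
  obtain i "is" where ii: "ii = i # is" "length is = M" using Suc.prems(3) by (cases ii) auto
  have e: "replicate \<alpha> A1 @ replicate \<beta> Bs @ replicate \<gamma> A2 @ sel m2 (Upow M n) = Wd (i#is)"
    using Suc.prems(2) sp ii by simp
  note AB1 = AB[OF ms(3)]
  from M1[OF e abg(3)] show ?case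
  proof (elim disjE)
    assume "\<alpha>=0 \<and> \<beta>=0 \<and> \<gamma>=0 \<and> sel m2 (Upow M n) = Wd (i#is)"
    then show ?thesis using AB1[of "i#is"] ii by auto
  next
    assume "\<alpha>=1 \<and> \<gamma>=0 \<and> \<beta> \<le> i \<and> sel m2 (Upow M n) = replicate (i-\<beta>) Bs @ A2 # Wd is"
    then show ?thesis using AB1[of "is" "i-\<beta>"] ii by auto
  next
    assume h: "\<alpha>=1 \<and> \<beta>=i \<and> \<gamma>=1 \<and> sel m2 (Upow M n) = Wd is"
    have IH: "(\<forall>i\<in>set is. i \<le> n) \<and> sel (map Not m2) (Upow M n) = Wd (map (\<lambda>i. n - i) is)"
      using Suc.IH[OF ms(3)] h ii by blast
    show ?thesis using IH h abg(2) spn ii by (simp add: Wd_Cons numeral_2_eq_2)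
  qed
qed

lemma qpos_set: "x \<in> set (qpos acts i) \<Longrightarrow> x < i \<and> acts ! x"
proof (induction i)
  case 0 then show ?case by simp
next
  case (Suc i)
  show ?case
  proof (cases "acts ! i")
    case True then show ?thesis using Suc by auto
  next
    case False
    then have "x \<in> set (qpos acts i)" using Suc.prems by simp (metis list.sel(2) list.set_sel(2))
    then show ?thesis using Suc.IH by auto
  qed
qed

lemma qpos_evol:
  assumes vr: "valid_run w acts" and ij: "i \<le> j" and jl: "j \<le> length w"
  shows "length (filter (\<lambda>t. \<not> acts!t) [i..<j]) \<le> length (qpos acts i @ filter (\<lambda>t. acts!t) [i..<j]) \<and>
    qpos acts j = drop (length (filter (\<lambda>t. \<not> acts!t) [i..<j])) (qpos acts i @ filter (\<lambda>t. acts!t) [i..<j]) \<and>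
    map (\<lambda>t. w!t) (filter (\<lambda>t. \<not> acts!t) [i..<j]) =
      map (\<lambda>t. w!t) (take (length (filter (\<lambda>t. \<not> acts!t) [i..<j])) (qpos acts i @ filter (\<lambda>t. acts!t) [i..<j]))"
  using ij
proof (induction j rule: dec_induct)
  case base then show ?case by simp
next
  case (step n)
  define Z where "Z = qpos acts i @ filter (\<lambda>t. acts!t) [i..<n]"
  define c where "c = length (filter (\<lambda>t. \<not> acts!t) [i..<n])"
  have IH: "c \<le> length Z" "qpos acts n = drop c Z"
      "map (\<lambda>t. w!t) (filter (\<lambda>t. \<not> acts!t) [i..<n]) = map (\<lambda>t. w!t) (take c Z)"
    using step by (simp_all add: Z_def c_def)
  have up: "[i..<Suc n] = [i..<n] @ [n]" using step(1) by simp
  show ?case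
  proof (cases "acts ! n")
    case True
    have Z': "qpos acts i @ filter (\<lambda>t. acts!t) [i..<Suc n] = Z @ [n]" using True up by (simp add: Z_def)
    have c': "length (filter (\<lambda>t. \<not>acts!t) [i..<Suc n]) = c" using True up by (simp add: c_def)
    have f': "filter (\<lambda>t. \<not>acts!t) [i..<Suc n] = filter (\<lambda>t. \<not>acts!t) [i..<n]" using True up by simp
    show ?thesis unfolding Z' c' f' using IH True by (simp add: c_def[symmetric])
  next
    case False
    have v: "qpos acts n \<noteq> [] \<and> w ! hd (qpos acts n) = w ! n"
      using vr False step(2) jl unfolding valid_run_def by auto
    then have cz: "c < length Z" using IH(2) by (metis drop_all not_less)
    have hd: "hd (qpos acts n) = Z ! c" using IH(2) cz by (simp add: hd_drop_conv_nth)
    have Z': "qpos acts i @ filter (\<lambda>t. acts!t) [i..<Suc n] = Z" using False up by (simp add: Z_def)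
    have c': "length (filter (\<lambda>t. \<not>acts!t) [i..<Suc n]) = Suc c" using False up by (simp add: c_def)
    have f': "filter (\<lambda>t. \<not>acts!t) [i..<Suc n] = filter (\<lambda>t. \<not>acts!t) [i..<n] @ [n]" using False up by simp
    show ?thesis unfolding Z' c' f' using IH False cz hd v
      by (simp add: take_Suc_conv_app_nth drop_Suc tl_drop c_def[symmetric])
  qed
qed

lemma G:
  fixes Q P :: "nat list"
  assumes "\<forall>x\<in>set Q. x < a" "\<forall>x\<in>set P. a \<le> x" "sorted_wrt (<) P"
    "c < length (Q @ P)" "(Q @ P) ! c = a"
  shows "c = length Q"
proof -
  have c1: "c \<ge> length Q"
  proof (rule ccontr)
    assume "\<not> ?thesis"
    then have e: "(Q @ P) ! c = Q ! c" by (simp add: nth_append)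
    have "Q ! c \<in> set Q" using \<open>\<not> _\<close> by simp
    then have "Q ! c < a" using assms(1) by blast
    then show False using e assms(5) by simp
  qed
  define d where "d = c - length Q"
  have pd: "P ! d = a" "d < length P" using assms(4,5) c1 by (auto simp: d_def nth_append)
  have "d = 0"
  proof (rule ccontr)
    assume "d \<noteq> 0"
    then have "P ! 0 < P ! d" using assms(3) pd(2) sorted_wrt_nth_less by blast
    moreover have "a \<le> P ! 0" using assms(2) pd(2) by (metis gr_zeroI less_nat_zero_code nth_mem order_less_trans)
    ultimately show False using pd by simp
  qed
  then show ?thesis using c1 d_def by simp
qed

lemma sel_window:
  "a + n \<le> length w \<Longrightarrow>
   sel (map (\<lambda>t. P (a+t)) [0..<n]) (take n (drop a w)) = map (\<lambda>t. w!t) (filter P [a..<a+n])"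
proof (induction n)
  case 0 then show ?case by simp
next
  case (Suc n)
  have t: "take (Suc n) (drop a w) = take n (drop a w) @ [w!(a+n)]"
    using Suc.prems by (simp add: take_Suc_conv_app_nth)
  have "sel (map (\<lambda>t. P (a+t)) [0..<Suc n]) (take (Suc n) (drop a w)) =
        sel (map (\<lambda>t. P (a+t)) [0..<n]) (take n (drop a w)) @ sel [P (a+n)] [w!(a+n)]"
    unfolding t using Suc.prems by (simp add: sel_append)
  also have "\<dots> = map (\<lambda>t. w!t) (filter P [a..<a+Suc n])"
    using Suc by (simp add: sel_def)
  finally show ?case .
qed

lemma push_all: "steps (Q, xs @ r) (Q @ xs, r)"
proof (induction xs arbitrary: Q)
  case Nil then show ?case by simp
next
  case (Cons x xs)
  have "step (Q, x # xs @ r) (Q @ [x], xs @ r)" by (rule step.push)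
  then show ?case using Cons[of "Q @ [x]"] by (simp add: converse_rtranclp_into_rtranclp)
qed

lemma pop_all: "steps (xs @ Q, xs @ r) (Q, r)"
proof (induction xs)
  case Nil then show ?case by simp
next
  case (Cons x xs)
  have "step (x # xs @ Q, x # xs @ r) (xs @ Q, xs @ r)" by (rule step.pop)
  then show ?case using Cons by (simp add: converse_rtranclp_into_rtranclp)
qed

lemma block:
  assumes "i \<le> n"
  shows "steps (Wd [i] @ Q, U n @ r) (Q @ Wd [n - i], r)"
proof -
  have un: "U n @ r = [A1] @ [A1] @ replicate i Bs @ replicate (n-i) Bs @ [A2] @ [A2] @ r"
    using assms by (simp add: U_def replicate_add[symmetric])
  have s1: "steps (Wd [i] @ Q, U n @ r) (replicate i Bs @ A2 # Q, [A1] @ replicate i Bs @ replicate (n-i) Bs @ [A2] @ [A2] @ r)"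
    unfolding un using pop_all[of "[A1]"] by (simp add: Wd_Cons Wd_def)
  have s2: "steps (replicate i Bs @ A2 # Q, [A1] @ replicate i Bs @ replicate (n-i) Bs @ [A2] @ [A2] @ r)
      (replicate i Bs @ A2 # Q @ [A1], replicate i Bs @ replicate (n-i) Bs @ [A2] @ [A2] @ r)"
    using push_all[of "replicate i Bs @ A2 # Q" "[A1]"] by simp
  have s3: "steps (replicate i Bs @ A2 # Q @ [A1], replicate i Bs @ replicate (n-i) Bs @ [A2] @ [A2] @ r)
      (A2 # Q @ [A1], replicate (n-i) Bs @ [A2] @ [A2] @ r)"
    using pop_all[of "replicate i Bs"] by simp
  have s4: "steps (A2 # Q @ [A1], replicate (n-i) Bs @ [A2] @ [A2] @ r)
      (A2 # Q @ [A1] @ replicate (n-i) Bs, [A2] @ [A2] @ r)"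
    using push_all[of "A2 # Q @ [A1]" "replicate (n-i) Bs"] by simp
  have s5: "steps (A2 # Q @ [A1] @ replicate (n-i) Bs, [A2] @ [A2] @ r)
      (Q @ [A1] @ replicate (n-i) Bs, [A2] @ r)"
    using pop_all[of "[A2]"] by simp
  have s6: "steps (Q @ [A1] @ replicate (n-i) Bs, [A2] @ r) (Q @ Wd [n - i], r)"
    using push_all[of "Q @ [A1] @ replicate (n-i) Bs" "[A2]"] by (simp add: Wd_def)
  show ?thesis using s1 s2 s3 s4 s5 s6 by (meson rtranclp_trans)
qed

lemma blocks:
  "\<forall>i\<in>set ii. i \<le> n \<Longrightarrow> steps (Wd ii @ Q, Upow (length ii) n @ r) (Q @ Wd (map (\<lambda>i. n - i) ii), r)"
proof (induction ii arbitrary: Q)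
  case Nil then show ?case by (simp add: Wd_def)
next
  case (Cons i xs)
  have wd: "Wd (i # xs) @ Q = Wd [i] @ (Wd xs @ Q)" by (simp add: Wd_def)
  have s1: "steps (Wd (i # xs) @ Q, Upow (length (i#xs)) n @ r) (Wd xs @ Q @ Wd [n-i], Upow (length xs) n @ r)"
    unfolding wd using block[of i n "Wd xs @ Q" "Upow (length xs) n @ r"] Cons.prems by simp
  have s2: "steps (Wd xs @ (Q @ Wd [n-i]), Upow (length xs) n @ r) ((Q @ Wd [n-i]) @ Wd (map (\<lambda>i. n - i) xs), r)"
    using Cons.IH[of "Q @ Wd [n-i]"] Cons.prems by simp
  show ?case using s1 s2 by (simp add: Wd_def rtranclp_trans)
qed

lemma filter_all_true: "(\<forall>t<L. P (a+t)) \<Longrightarrow> filter P [a..<a+L] = [a..<a+L]"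
  by (rule filter_True) (metis atLeastLessThan_iff le_add_diff_inverse nat_add_left_cancel_less set_upt)

lemma filter_all_false: "(\<forall>t<L. \<not> P (a+t)) \<Longrightarrow> filter P [a..<a+L] = []"
  by (rule filter_False) (metis atLeastLessThan_iff le_add_diff_inverse nat_add_left_cancel_less set_upt)

lemma len_v: "length (v l) = 2 * l + 2"
  by (simp add: v_def)

lemma D_Upow: "D S k = Upow (3 * tp_m S - k + 1) (nk S k)"
  by (simp add: D_def pw_def)

lemma part2:
  assumes "\<forall>i\<in>set ii. i \<le> n"
  shows "steps (Wd ii, v1 @ Upow (length ii) n @ v1 @ v2 @ Upow (length ii) n @ v2 @ T) (Wd ii, T)"
proof -
  let ?R = "Wd (map (\<lambda>i. n - i) ii)"
  have s1: "steps (Wd ii, v1 @ Upow (length ii) n @ v1 @ v2 @ Upow (length ii) n @ v2 @ T)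
               (Wd ii @ v1, Upow (length ii) n @ v1 @ v2 @ Upow (length ii) n @ v2 @ T)"
    by (rule push_all)
  have s2: "steps (Wd ii @ v1, Upow (length ii) n @ v1 @ v2 @ Upow (length ii) n @ v2 @ T)
               (v1 @ ?R, v1 @ v2 @ Upow (length ii) n @ v2 @ T)"
    by (rule blocks[OF assms])
  have s3: "steps (v1 @ ?R, v1 @ v2 @ Upow (length ii) n @ v2 @ T) (?R, v2 @ Upow (length ii) n @ v2 @ T)"
    by (rule pop_all)
  have s4: "steps (?R, v2 @ Upow (length ii) n @ v2 @ T) (?R @ v2, Upow (length ii) n @ v2 @ T)"
    by (rule push_all)
  have a2: "\<forall>i\<in>set (map (\<lambda>i. n - i) ii). i \<le> n" by auto
  have s5: "steps (?R @ v2, Upow (length ii) n @ v2 @ T) (v2 @ Wd (map (\<lambda>i. n - i) (map (\<lambda>i. n - i) ii)), v2 @ T)"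
    using blocks[OF a2, of v2 "v2 @ T"] by simp
  have mm: "map (\<lambda>i. n - i) (map (\<lambda>i. n - i) ii) = ii"
    using assms by (induction ii) auto
  have s6: "steps (v2 @ Wd ii, v2 @ T) (Wd ii, T)" by (rule pop_all)
  show ?thesis using s1 s2 s3 s4 s5 s6 unfolding mm by (meson rtranclp_trans)
qed

theorem lemma6:
  fixes S :: "nat list" and k :: nat and ii :: "nat list"
  assumes "three_partition S"
    and "sorted_wrt (\<ge>) S"
    and "1 \<le> k" and "k \<le> 3 * tp_m S"
    and "length ii = 3 * tp_m S - k + 1"
  shows "(\<forall>acts pre T W'.
            accepting_run (wS S) acts \<and> V_condition S acts \<and>
            wS S = pre @ seg S k @ T \<and>
            config_at (wS S) acts (length pre) = (Wd ii, seg S k @ T) \<and>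
            config_at (wS S) acts (length pre + length (seg S k)) = (W', T)
          \<longrightarrow> W' = Wd ii \<and> (\<forall>i \<in> set ii. i \<le> nk S k))
       \<and> ((\<forall>i \<in> set ii. i \<le> nk S k) \<longrightarrow> (\<forall>T. steps (Wd ii, seg S k @ T) (Wd ii, T)))"
proof (intro conjI allI impI)
  fix T
  assume "\<forall>i \<in> set ii. i \<le> nk S k"
  then show "steps (Wd ii, seg S k @ T) (Wd ii, T)"
    using part2[of ii "nk S k" "v (4*k-3)" "v (4*k-2)" T]
    by (simp add: seg_def D_Upow assms(5))
next
  fix acts pre T W'
  assume H: "accepting_run (wS S) acts \<and> V_condition S acts \<and>
            wS S = pre @ seg S k @ T \<and>
            config_at (wS S) acts (length pre) = (Wd ii, seg S k @ T) \<and>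
            config_at (wS S) acts (length pre + length (seg S k)) = (W', T)"
  define w where "w = wS S"
  define n where "n = nk S k"
  define M where "M = length ii"
  define v1 where "v1 = v (4*k-3)"
  define v2 where "v2 = v (4*k-2)"
  define Dk where "Dk = D S k"
  define L1 where "L1 = length v1"
  define L2 where "L2 = length v2"
  define LD where "LD = length Dk"
  define n0 where "n0 = length pre"
  define a1 where "a1 = n0 + L1"
  define q1 where "q1 = a1 + LD"
  define p2 where "p2 = q1 + L1"
  define a2 where "a2 = p2 + L2"
  define q2 where "q2 = a2 + LD"
  define e where "e = q2 + L2"
  have DkU: "Dk = Upow M n" unfolding Dk_def M_def n_def using assms(5) by (simp add: D_Upow)
  have wd: "w = pre @ v1 @ Dk @ v1 @ v2 @ Dk @ v2 @ T"
    using H by (simp add: w_def seg_def v1_def v2_def Dk_def)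
  have vr: "valid_run w acts" using H unfolding w_def accepting_run_def by blast
  have C0: "config_at w acts n0 = (Wd ii, seg S k @ T)" using H unfolding w_def n0_def by blast
  have Q0: "map (\<lambda>j. w!j) (qpos acts n0) = Wd ii"
    using C0 by (simp add: config_at_def)
  have lseg: "length pre + length (seg S k) = e"
    by (simp add: seg_def e_def q2_def a2_def p2_def q1_def a1_def n0_def L1_def L2_def LD_def v1_def v2_def Dk_def)
  have CE: "config_at w acts e = (W', T)" using H lseg unfolding w_def by metis
  have QE: "map (\<lambda>j. w!j) (qpos acts e) = W'"
    using CE by (simp add: config_at_def)
  have lw: "length w = e + length T"
    by (simp add: wd e_def q2_def a2_def p2_def q1_def a1_def n0_def L1_def L2_def LD_def)
  have L1p: "0 < L1" by (simp add: L1_def v1_def len_v)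
  have L2p: "0 < L2" by (simp add: L2_def v2_def len_v)
  have VC: "\<And>l p q t. 1 \<le> l \<Longrightarrow> l \<le> 12 * tp_m S \<Longrightarrow> p < q \<Longrightarrow>
       take (length (v l)) (drop p w) = v l \<Longrightarrow> take (length (v l)) (drop q w) = v l \<Longrightarrow>
       t < length (v l) \<Longrightarrow> matched w acts (p + t) (q + t)"
    using H unfolding V_condition_def w_def by blast
  have d1: "drop n0 w = v1 @ Dk @ v1 @ v2 @ Dk @ v2 @ T" by (simp add: wd n0_def)
  have d2: "drop a1 w = Dk @ v1 @ v2 @ Dk @ v2 @ T" by (simp add: wd a1_def n0_def L1_def)
  have d3: "drop q1 w = v1 @ v2 @ Dk @ v2 @ T" by (simp add: wd q1_def a1_def n0_def L1_def LD_def)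
  have d4: "drop p2 w = v2 @ Dk @ v2 @ T" by (simp add: wd p2_def q1_def a1_def n0_def L1_def LD_def)
  have d5: "drop a2 w = Dk @ v2 @ T" by (simp add: wd a2_def p2_def q1_def a1_def n0_def L1_def L2_def LD_def)
  have d6: "drop q2 w = v2 @ T" by (simp add: wd q2_def a2_def p2_def q1_def a1_def n0_def L1_def L2_def LD_def)
  have k1: "1 \<le> 4*k-3" "4*k-3 \<le> 12 * tp_m S" "1 \<le> 4*k-2" "4*k-2 \<le> 12 * tp_m S"
    using assms(3,4) by auto
  have m1: "\<And>t. t < L1 \<Longrightarrow> matched w acts (n0 + t) (q1 + t)"
    using VC[OF k1(1,2), of n0 q1] d1 d3 L1p
    by (simp add: v1_def[symmetric] L1_def q1_def a1_def)
  have m2: "\<And>t. t < L2 \<Longrightarrow> matched w acts (p2 + t) (q2 + t)"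
    using VC[OF k1(3,4), of p2 q2] d4 d6 L2p
    by (simp add: v2_def[symmetric] L2_def q2_def a2_def)
  have pu1: "\<forall>t<L1. acts!(n0+t)" and po1: "\<forall>t<L1. \<not> acts!(q1+t)"
   and hq1: "qpos acts q1 \<noteq> [] \<and> hd (qpos acts q1) = n0"
  proof -
    show "\<forall>t<L1. acts!(n0+t)"
      using m1 qpos_set unfolding matched_def by (metis list.set_sel(1))
    show "\<forall>t<L1. \<not> acts!(q1+t)" using m1 unfolding matched_def by blast
    show "qpos acts q1 \<noteq> [] \<and> hd (qpos acts q1) = n0" using m1[OF L1p] unfolding matched_def by simp
  qed
  have pu2: "\<forall>t<L2. acts!(p2+t)" and po2: "\<forall>t<L2. \<not> acts!(q2+t)"
   and hq2: "qpos acts q2 \<noteq> [] \<and> hd (qpos acts q2) = p2"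
  proof -
    show "\<forall>t<L2. acts!(p2+t)"
      using m2 qpos_set unfolding matched_def by (metis list.set_sel(1))
    show "\<forall>t<L2. \<not> acts!(q2+t)" using m2 unfolding matched_def by blast
    show "qpos acts q2 \<noteq> [] \<and> hd (qpos acts q2) = p2" using m2[OF L2p] unfolding matched_def by simp
  qed
  define F1 where "F1 = filter (\<lambda>t. acts!t) [n0..<q1]"
  define R1 where "R1 = filter (\<lambda>t. acts!t) [a1..<a1+LD]"
  have up1: "[n0..<q1] = [n0..<n0+L1] @ [a1..<a1+LD]"
    unfolding q1_def a1_def by (rule upt_add_eq_append) simp
  have F1e: "F1 = [n0..<a1] @ R1"
    unfolding F1_def R1_def up1 using filter_all_true[OF pu1] by (simp add: a1_def)
  have P1e: "filter (\<lambda>t. \<not> acts!t) [n0..<q1] = filter (\<lambda>t. \<not> acts!t) [a1..<a1+LD]"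
    unfolding up1 using filter_all_false[of L1 "\<lambda>t. \<not> acts!t" n0] pu1 by simp
  have lq1: "q1 \<le> length w" and lq2: "q2 \<le> length w" and le: "e \<le> length w"
    using lw by (auto simp: e_def q2_def a2_def p2_def)
  note E1 = qpos_evol[OF vr, of n0 q1, folded F1_def]
  have c1: "length (filter (\<lambda>t. \<not> acts!t) [n0..<q1]) = length (qpos acts n0)"
  proof (rule G[of _ n0 F1])
    show "\<forall>x\<in>set (qpos acts n0). x < n0" using qpos_set by blast
    show "\<forall>x\<in>set F1. n0 \<le> x" by (simp add: F1_def)
    show "sorted_wrt (<) F1" unfolding F1_def by (rule sorted_wrt_filter) simp
    have "drop (length (filter (\<lambda>t. \<not> acts!t) [n0..<q1])) (qpos acts n0 @ F1) \<noteq> []"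
      using E1 hq1 lq1 by (simp add: q1_def a1_def)
    then show cl: "length (filter (\<lambda>t. \<not> acts!t) [n0..<q1]) < length (qpos acts n0 @ F1)"
      by (metis drop_all not_less)
    show "(qpos acts n0 @ F1) ! length (filter (\<lambda>t. \<not> acts!t) [n0..<q1]) = n0"
      using E1 hq1 lq1 cl by (simp add: q1_def a1_def hd_drop_conv_nth[symmetric])
  qed
  have qq1: "qpos acts q1 = F1" using E1 lq1 c1 by (simp add: q1_def a1_def)
  have pw1: "map (\<lambda>t. w!t) (filter (\<lambda>t. \<not> acts!t) [a1..<a1+LD]) = Wd ii"
    using E1 lq1 c1 Q0 P1e by (simp add: q1_def a1_def)
  have la1: "a1 + LD \<le> length w" using lq1 by (simp add: q1_def)
  have tD1: "take LD (drop a1 w) = Dk" by (simp add: d2 LD_def)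
  have S1: "sel (map (\<lambda>t. \<not> acts!(a1+t)) [0..<LD]) (Upow M n) = Wd ii"
    using sel_window[OF la1, of "\<lambda>t. \<not> acts!t"] tD1 pw1 DkU by simp
  have lm1: "length (map (\<lambda>t. \<not> acts!(a1+t)) [0..<LD]) = length (Upow M n)"
    by (simp add: LD_def DkU)
  have C1: "(\<forall>i\<in>set ii. i \<le> n) \<and> sel (map Not (map (\<lambda>t. \<not> acts!(a1+t)) [0..<LD])) (Upow M n) = Wd (map (\<lambda>i. n - i) ii)"
    by (rule C[OF lm1 S1]) (simp add: M_def)
  have R1w: "map (\<lambda>t. w!t) R1 = Wd (map (\<lambda>i. n - i) ii)"
    using C1 sel_window[OF la1, of "\<lambda>t. acts!t"] tD1 DkU by (simp add: R1_def comp_def)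
  define F2 where "F2 = filter (\<lambda>t. acts!t) [q1..<q2]"
  define R2 where "R2 = filter (\<lambda>t. acts!t) [a2..<a2+LD]"
  have up2: "[q1..<q2] = [q1..<q1+L1] @ [p2..<p2+L2] @ [a2..<a2+LD]"
  proof -
    have "[q1..<q2] = [q1..<p2] @ [p2..<q2]" unfolding q2_def a2_def p2_def
      using upt_add_eq_append[of q1 "q1+L1" "L2+LD"] by (simp add: add.assoc)
    moreover have "[p2..<q2] = [p2..<p2+L2] @ [a2..<a2+LD]" unfolding q2_def a2_def
      by (rule upt_add_eq_append) simp
    ultimately show ?thesis by (simp add: p2_def)
  qed
  have F2e: "F2 = [p2..<a2] @ R2"
    unfolding F2_def R2_def up2 using filter_all_true[OF pu2] filter_all_false[of L1 "\<lambda>t. acts!t" q1] po1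
    by (simp add: a2_def)
  have P2e: "filter (\<lambda>t. \<not> acts!t) [q1..<q2] = [q1..<p2] @ filter (\<lambda>t. \<not> acts!t) [a2..<a2+LD]"
    unfolding up2 using filter_all_true[of L1 "\<lambda>t. \<not> acts!t" q1] po1
       filter_all_false[of L2 "\<lambda>t. \<not> acts!t" p2] pu2 by (simp add: p2_def)
  have q12: "q1 \<le> q2" by (simp add: q2_def a2_def p2_def)
  note E2 = qpos_evol[OF vr q12 lq2, folded F2_def, unfolded qq1]
  have c2: "length (filter (\<lambda>t. \<not> acts!t) [q1..<q2]) = length F1"
  proof (rule G[of _ p2 F2])
    show "\<forall>x\<in>set F1. x < p2" using qpos_set[of _ acts q1] unfolding qq1 by (fastforce simp: p2_def)
    show "\<forall>x\<in>set F2. p2 \<le> x" by (auto simp: F2e R2_def a2_def)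
    show "sorted_wrt (<) F2" unfolding F2_def by (rule sorted_wrt_filter) simp
    have "drop (length (filter (\<lambda>t. \<not> acts!t) [q1..<q2])) (F1 @ F2) \<noteq> []"
      using E2 hq2 by simp
    then show cl: "length (filter (\<lambda>t. \<not> acts!t) [q1..<q2]) < length (F1 @ F2)"
      by (metis drop_all not_less)
    show "(F1 @ F2) ! length (filter (\<lambda>t. \<not> acts!t) [q1..<q2]) = p2"
      using E2 hq2 cl by (simp add: hd_drop_conv_nth[symmetric])
  qed
  have qq2: "qpos acts q2 = F2" using E2 c2 by simp
  have "map (\<lambda>t. w!t) [q1..<p2] @ map (\<lambda>t. w!t) (filter (\<lambda>t. \<not> acts!t) [a2..<a2+LD])
      = map (\<lambda>t. w!t) [n0..<a1] @ map (\<lambda>t. w!t) R1"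
    using E2 c2 P2e F1e by simp
  moreover have "length (map (\<lambda>t. w!t) [q1..<p2]) = length (map (\<lambda>t. w!t) [n0..<a1])"
    by (simp add: p2_def a1_def)
  ultimately have pw2: "map (\<lambda>t. w!t) (filter (\<lambda>t. \<not> acts!t) [a2..<a2+LD]) = Wd (map (\<lambda>i. n - i) ii)"
    using R1w by simp
  have la2: "a2 + LD \<le> length w" using lq2 by (simp add: q2_def)
  have tD2: "take LD (drop a2 w) = Dk" by (simp add: d5 LD_def)
  have S2: "sel (map (\<lambda>t. \<not> acts!(a2+t)) [0..<LD]) (Upow M n) = Wd (map (\<lambda>i. n - i) ii)"
    using sel_window[OF la2, of "\<lambda>t. \<not> acts!t"] tD2 pw2 DkU by simp
  have lm2: "length (map (\<lambda>t. \<not> acts!(a2+t)) [0..<LD]) = length (Upow M n)"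
    by (simp add: LD_def DkU)
  have C2: "(\<forall>i\<in>set (map (\<lambda>i. n - i) ii). i \<le> n) \<and> sel (map Not (map (\<lambda>t. \<not> acts!(a2+t)) [0..<LD])) (Upow M n) = Wd (map (\<lambda>i. n - i) (map (\<lambda>i. n - i) ii))"
    by (rule C[OF lm2 S2]) (simp add: M_def)
  have mm: "map (\<lambda>i. n - i) (map (\<lambda>i. n - i) ii) = ii"
  proof -
    have "\<forall>i\<in>set ii. i \<le> n" using C1 by blast
    then show ?thesis by (induction ii) auto
  qed
  have R2w: "map (\<lambda>t. w!t) R2 = Wd ii"
    using C2 sel_window[OF la2, of "\<lambda>t. acts!t"] tD2 DkU mm by (simp add: R2_def comp_def)
  have q2e: "q2 \<le> e" by (simp add: e_def)
  note E3 = qpos_evol[OF vr q2e le, unfolded qq2]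
  have f3a: "filter (\<lambda>t. acts!t) [q2..<e] = []"
    unfolding e_def using filter_all_false[of L2 "\<lambda>t. acts!t" q2] po2 by simp
  have f3b: "filter (\<lambda>t. \<not> acts!t) [q2..<e] = [q2..<e]"
    unfolding e_def using filter_all_true[of L2 "\<lambda>t. \<not> acts!t" q2] po2 by simp
  have qe: "qpos acts e = R2"
    using E3 unfolding f3a f3b by (simp add: F2e e_def a2_def)
  show "W' = Wd ii" using QE qe R2w by simp
  show "\<forall>i \<in> set ii. i \<le> nk S k" using C1 by (simp add: n_def)
qed

end
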